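(* Let $G$ be an unweighted digraph without loops and $M(t)$ its directed deformed graph Laplacian. Then $1$ is always an eigenvalue of $M(t)$, and its geometric multiplicity equals the number of connected components of the undirected part $G_U$ of $G$. Moreover, $-1$ is an eigenvalue of $M(t)$ if and only if $G_U$ has at least one bipartite connected component, and in that case its geometric multiplicity equals the number of bipartite connected components of $G_U$.
   Context: A digraph $G=(V,E)$, no loops or multiple edges, adjacency matrix $A$; $S=A\circ A^T$, $D=\mathrm{diag}(\mathrm{diag}(A^2))$; $M(t)=I-At+(D-I)t^2+(A-S)t^3$. The undirected part $G_U$ of $G$ is the undirected graph on $V$ whose edges are the pairs $\{i,j\}$ with both $(i,j),(j,i)\in E$ (adjacency matrix $S$); an isolated vertex of $G_U$ counts as a (bipartite) connected component. The geometric multiplicity of an eigenvalue $\lambda$ of $M(t)$ is $\dim\ker M(\lambda)$. *)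

theory Defs
  imports "HOL-Analysis.Analysis"
begin

definition adj_mat :: "('n::finite \<times> 'n) set \<Rightarrow> real^'n^'n" where
  "adj_mat E = (\<chi> i j. if (i, j) \<in> E then 1 else 0)"

definition sym_mat :: "('n::finite \<times> 'n) set \<Rightarrow> real^'n^'n" where
  "sym_mat E = (\<chi> i j. (adj_mat E) $ i $ j * (adj_mat E) $ j $ i)"

definition deg_mat :: "('n::finite \<times> 'n) set \<Rightarrow> real^'n^'n" where
  "deg_mat E = (\<chi> i j. if i = j then (adj_mat E ** adj_mat E) $ i $ i else 0)"

definition deformed_laplacian :: "('n::finite \<times> 'n) set \<Rightarrow> real \<Rightarrow> real^'n^'n" where
  "deformed_laplacian E t =
     mat 1 - t *\<^sub>R adj_mat E + (t^2) *\<^sub>R (deg_mat E - mat 1)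
       + (t^3) *\<^sub>R (adj_mat E - sym_mat E)"

definition is_eigenvalue :: "(real \<Rightarrow> real^'n^'n) \<Rightarrow> real \<Rightarrow> bool" where
  "is_eigenvalue M l \<longleftrightarrow> (\<exists>x. x \<noteq> 0 \<and> M l *v x = 0)"

definition geom_mult :: "(real \<Rightarrow> real^'n^'n) \<Rightarrow> real \<Rightarrow> nat" where
  "geom_mult M l = dim {x. M l *v x = 0}"

definition undir_edges :: "('n \<times> 'n) set \<Rightarrow> ('n \<times> 'n) set" where
  "undir_edges E = {(i, j). (i, j) \<in> E \<and> (j, i) \<in> E}"

text \<open>Connected components of G_U (isolated vertices are singleton components)\<close>
definition undir_components :: "('n \<times> 'n) set \<Rightarrow> 'n set set" where
  "undir_components E = UNIV // ((undir_edges E)\<^sup>*)"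

definition bipartite_on :: "('n \<times> 'n) set \<Rightarrow> 'n set \<Rightarrow> bool" where
  "bipartite_on E C \<longleftrightarrow>
     (\<exists>f :: 'n \<Rightarrow> bool. \<forall>i\<in>C. \<forall>j\<in>C. (i, j) \<in> undir_edges E \<longrightarrow> f i \<noteq> f j)"

end

theory Submission
  imports Defs
begin

lemma comp_eq:
  assumes s: "sym R" and C: "C \<in> UNIV // R\<^sup>*" and i: "i \<in> C"
  shows "C = R\<^sup>* `` {i}"
proof -
  obtain a where a: "C = R\<^sup>* `` {a}" using C by (auto elim: quotientE)
  have ai: "(a,i) \<in> R\<^sup>*" using a i by auto
  have ia: "(i,a) \<in> R\<^sup>*" using sym_rtrancl[OF s] ai by (auto simp: sym_def)
  show ?thesis using a ai ia by (auto intro: rtrancl_trans)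
qed

lemma comp_closed:
  assumes s: "sym R" and C: "C \<in> UNIV // R\<^sup>*" and i: "i \<in> C" and e: "(i,j) \<in> R"
  shows "j \<in> C"
  using comp_eq[OF s C i] e by auto

lemma comp_conn:
  assumes s: "sym R" and C: "C \<in> UNIV // R\<^sup>*" and i: "i \<in> C" and j: "j \<in> C"
  shows "(i,j) \<in> R\<^sup>*"
  using comp_eq[OF s C i] j by auto

lemma comp_of: "R\<^sup>* `` {i} \<in> UNIV // R\<^sup>*" "i \<in> R\<^sup>* `` {i}"
  by (auto simp: quotient_def)

lemma propag:
  assumes h: "\<And>i j. (i,j) \<in> R \<Longrightarrow> h i = h j" and p: "(a,b) \<in> R\<^sup>*"
  shows "h a = h b"
  using p by (induction rule: rtrancl_induct) (auto dest: h)


definition sU :: "('n::finite \<times> 'n) set \<Rightarrow> 'n \<Rightarrow> 'n \<Rightarrow> real" where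
  "sU E i j = (if (i,j) \<in> undir_edges E then 1 else 0)"

lemma sym_entry: "sym_mat E $ i $ j = sU E i j"
  by (simp add: sym_mat_def adj_mat_def sU_def undir_edges_def)

lemma deg_entry: "(adj_mat E ** adj_mat E) $ i $ i = (\<Sum>j\<in>UNIV. sU E i j)"
  by (simp add: deg_mat_def matrix_matrix_mult_def sym_entry[symmetric] sym_mat_def)

lemma lap_eq:
  assumes "\<sigma>^2 = (1::real)"
  shows "deformed_laplacian E \<sigma> = deg_mat E - \<sigma> *\<^sub>R sym_mat E"
proof -
  have "\<sigma>^3 = \<sigma>" using assms by (metis power3_eq_cube power2_eq_square mult_1_right mult.assoc)
  then show ?thesis using assms
    by (simp add: deformed_laplacian_def algebra_simps)
qed

lemma lap_mult:
  assumes "\<sigma>^2 = (1::real)"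
  shows "(deformed_laplacian E \<sigma> *v x) $ i = (\<Sum>j\<in>UNIV. sU E i j * (x$i - \<sigma> * x$j))"
proof -
  have "(deformed_laplacian E \<sigma> *v x) $ i = (\<Sum>j\<in>UNIV. (deg_mat E - \<sigma> *\<^sub>R sym_mat E) $ i $ j * x$j)"
    by (simp add: lap_eq[OF assms] matrix_vector_mult_def)
  also have "\<dots> = (\<Sum>j\<in>UNIV. (if i = j then (adj_mat E ** adj_mat E) $ i $ i else 0) * x$j) - \<sigma> * (\<Sum>j\<in>UNIV. sU E i j * x$j)"
    by (simp add: sym_entry algebra_simps sum_subtractf sum_distrib_left deg_mat_def)
  also have "\<dots> = (adj_mat E ** adj_mat E) $ i $ i * x$i - \<sigma> * (\<Sum>j\<in>UNIV. sU E i j * x$j)"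
    by (simp only: if_distrib[where f="\<lambda>z. z * _"] mult_zero_left) (simp add: if_distrib)
  also have "\<dots> = (\<Sum>j\<in>UNIV. sU E i j * (x$i - \<sigma> * x$j))"
    by (simp add: deg_entry sum_distrib_left sum_distrib_right sum_subtractf algebra_simps)
  finally show ?thesis .
qed


lemma sU_sym: "sU E i j = sU E j i"
  by (auto simp: sU_def undir_edges_def)

lemma ker_iff:
  assumes s2: "\<sigma>^2 = (1::real)"
  shows "(deformed_laplacian E \<sigma> *v x = 0) \<longleftrightarrow> (\<forall>i j. (i,j) \<in> undir_edges E \<longrightarrow> x$i = \<sigma> * x$j)"
proof
  assume h: "\<forall>i j. (i,j) \<in> undir_edges E \<longrightarrow> x$i = \<sigma> * x$j"
  show "deformed_laplacian E \<sigma> *v x = 0"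
  proof (rule vec_eq_iff[THEN iffD2, rule_format])
    fix i
    have "\<And>j. sU E i j * (x$i - \<sigma> * x$j) = 0" using h by (auto simp: sU_def)
    then have "(\<Sum>j\<in>UNIV. sU E i j * (x$i - \<sigma> * x$j)) = 0" by (intro sum.neutral) blast
    then show "(deformed_laplacian E \<sigma> *v x) $ i = 0 $ i" by (simp add: lap_mult[OF s2])
  qed
next
  assume h: "deformed_laplacian E \<sigma> *v x = 0"
  define q where "q i j = sU E i j * (x$i - \<sigma> * x$j)^2" for i j
  define p where "p i j = sU E i j * (x$i * x$i - \<sigma> * x$i * x$j)" for i j
  have q_eq: "q i j = p i j + p j i" for i j
    using s2 by (simp add: q_def p_def sU_sym[of E j i] power2_eq_square algebra_simps)
  have swp: "(\<Sum>i\<in>UNIV. \<Sum>j\<in>UNIV. p j i) = (\<Sum>i\<in>UNIV. \<Sum>j\<in>UNIV. p i j)"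
    by (rule sum.swap)
  have "(\<Sum>i\<in>UNIV. \<Sum>j\<in>UNIV. p i j) = (\<Sum>i\<in>UNIV. x$i * (deformed_laplacian E \<sigma> *v x) $ i)"
    by (simp add: lap_mult[OF s2] sum_distrib_left p_def algebra_simps)
  also have "\<dots> = 0" using h by simp
  finally have p0: "(\<Sum>i\<in>UNIV. \<Sum>j\<in>UNIV. p i j) = 0" .
  have "(\<Sum>i\<in>UNIV. \<Sum>j\<in>UNIV. q i j) = 0"
    using swp p0 by (simp add: q_eq sum.distrib)
  moreover have qnn: "q i j \<ge> 0" for i j by (simp add: q_def sU_def)
  ultimately have "\<forall>i. (\<Sum>j\<in>UNIV. q i j) = 0"
    by (subst (asm) sum_nonneg_eq_0_iff) (auto intro: sum_nonneg)
  then have "\<forall>i j. q i j = 0"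
    using qnn by (simp add: sum_nonneg_eq_0_iff)
  then show "\<forall>i j. (i,j) \<in> undir_edges E \<longrightarrow> x$i = \<sigma> * x$j"
  proof (intro allI impI)
    fix i j assume "(i,j) \<in> undir_edges E"
    moreover have "q i j = 0" using \<open>\<forall>i j. q i j = 0\<close> by blast
    ultimately have "(x$i - \<sigma> * x$j)^2 = 0" unfolding q_def sU_def by simp
    then show "x$i = \<sigma> * x$j" by simp
  qed
qed


definition goodc :: "('n \<times> 'n) set \<Rightarrow> real \<Rightarrow> 'n set \<Rightarrow> bool" where
  "goodc R \<sigma> C \<longleftrightarrow> (\<exists>g. (\<forall>i\<in>C. g i = 1 \<or> g i = -1) \<and> (\<forall>i\<in>C. \<forall>j\<in>C. (i,j) \<in> R \<longrightarrow> g i = \<sigma> * g j))"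

definition gfun :: "('n \<times> 'n) set \<Rightarrow> real \<Rightarrow> 'n set \<Rightarrow> 'n \<Rightarrow> real" where
  "gfun R \<sigma> C = (SOME g. (\<forall>i\<in>C. g i = 1 \<or> g i = -1) \<and> (\<forall>i\<in>C. \<forall>j\<in>C. (i,j) \<in> R \<longrightarrow> g i = \<sigma> * g j))"

definition vc :: "('n::finite \<times> 'n) set \<Rightarrow> real \<Rightarrow> 'n set \<Rightarrow> real^'n" where
  "vc R \<sigma> C = (\<chi> i. if i \<in> C then gfun R \<sigma> C i else 0)"

definition Kset :: "('n::finite \<times> 'n) set \<Rightarrow> real \<Rightarrow> (real^'n) set" where
  "Kset R \<sigma> = {x. \<forall>i j. (i,j) \<in> R \<longrightarrow> x$i = \<sigma> * x$j}"

lemma gfun_prop: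
  assumes "goodc R \<sigma> C"
  shows "\<forall>i\<in>C. gfun R \<sigma> C i = 1 \<or> gfun R \<sigma> C i = -1"
    "\<forall>i\<in>C. \<forall>j\<in>C. (i,j) \<in> R \<longrightarrow> gfun R \<sigma> C i = \<sigma> * gfun R \<sigma> C j"
  using someI_ex[OF assms[unfolded goodc_def]] unfolding gfun_def by blast+

lemma propag2:
  assumes h: "\<And>j k. (j,k) \<in> R \<Longrightarrow> (a,j) \<in> R\<^sup>* \<Longrightarrow> h j = h k" and p: "(a,b) \<in> R\<^sup>*"
  shows "h a = h b"
  using p
proof (induction rule: rtrancl_induct)
  case base then show ?case by simp
next
  case (step y z) then show ?case using h[of y z] by simp
qed

lemma vc_at: "vc R \<sigma> C $ i = (if i \<in> C then gfun R \<sigma> C i else 0)"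
  by (simp add: vc_def)

lemma vc_nz:
  assumes "goodc R \<sigma> C" "a \<in> C" shows "vc R \<sigma> C $ a \<noteq> 0"
  using gfun_prop(1)[OF assms(1)] assms(2) by (auto simp: vc_at)

lemma vc_K:
  assumes s: "sym R" and C: "C \<in> UNIV // R\<^sup>*" and g: "goodc R \<sigma> C"
  shows "vc R \<sigma> C \<in> Kset R \<sigma>"
  unfolding Kset_def
proof (intro CollectI allI impI)
  fix i j assume e: "(i,j) \<in> R"
  have ej: "(j,i) \<in> R" using s e by (auto simp: sym_def)
  show "vc R \<sigma> C $ i = \<sigma> * vc R \<sigma> C $ j"
  proof (cases "i \<in> C")
    case True
    then have "j \<in> C" using comp_closed[OF s C True e] by simp
    then show ?thesis using True e gfun_prop(2)[OF g] by (simp add: vc_at)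
  next
    case False
    then have "j \<notin> C" using comp_closed[OF s C _ ej] by blast
    then show ?thesis using False by (simp add: vc_at)
  qed
qed

lemma comp_ne: "C \<in> UNIV // R\<^sup>* \<Longrightarrow> \<exists>a. a \<in> C"
  by (auto simp: quotient_def)

lemma vc_inj:
  assumes s: "sym R"
  shows "inj_on (vc R \<sigma>) {C \<in> UNIV // R\<^sup>*. goodc R \<sigma> C}"
proof (rule inj_onI)
  fix C D assume C: "C \<in> {C \<in> UNIV // R\<^sup>*. goodc R \<sigma> C}" and D: "D \<in> {C \<in> UNIV // R\<^sup>*. goodc R \<sigma> C}"
    and eq: "vc R \<sigma> C = vc R \<sigma> D"
  obtain a where a: "a \<in> C" using comp_ne C by blast
  have "vc R \<sigma> D $ a \<noteq> 0" using vc_nz[of R \<sigma> C a] C a eq by simp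
  then have aD: "a \<in> D" by (simp add: vc_at split: if_splits)
  show "C = D" using comp_eq[OF s _ a] comp_eq[OF s _ aD] C D by auto
qed

lemma vc_orth:
  assumes s: "sym R" and C: "C \<in> UNIV // R\<^sup>*" and D: "D \<in> UNIV // R\<^sup>*" and ne: "C \<noteq> D"
  shows "vc R \<sigma> C \<bullet> vc R \<sigma> D = 0"
proof -
  have "\<And>i. vc R \<sigma> C $ i * vc R \<sigma> D $ i = 0"
  proof -
    fix i
    show "vc R \<sigma> C $ i * vc R \<sigma> D $ i = 0"
    proof (cases "i \<in> C \<and> i \<in> D")
      case True
      then have "C = D" using comp_eq[OF s C] comp_eq[OF s D] by auto
      then show ?thesis using ne by simp
    next
      case False then show ?thesis by (auto simp: vc_at)
    qed
  qed
  then have "(\<Sum>i\<in>UNIV. vc R \<sigma> C $ i * vc R \<sigma> D $ i) = 0" by (intro sum.neutral) blast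
  then show ?thesis by (simp add: inner_vec_def)
qed


lemma K_value:
  fixes x :: "real^'n::finite" and i :: 'n
  assumes s: "sym R" and s2: "\<sigma>^2 = (1::real)" and x: "x \<in> Kset R \<sigma>"
  defines "C0 \<equiv> R\<^sup>* `` {i}"
  shows "goodc R \<sigma> C0 \<Longrightarrow> r \<in> C0 \<Longrightarrow> x$i = x$r * gfun R \<sigma> C0 r * gfun R \<sigma> C0 i"
    and "\<not> goodc R \<sigma> C0 \<Longrightarrow> x$i = 0"
proof -
  have C0: "C0 \<in> UNIV // R\<^sup>*" "i \<in> C0" unfolding C0_def by (rule comp_of)+
  have xe: "\<And>j k. (j,k) \<in> R \<Longrightarrow> x$j = \<sigma> * x$k" using x by (auto simp: Kset_def)
  have inC: "\<And>j. (i,j) \<in> R\<^sup>* \<Longrightarrow> j \<in> C0" unfolding C0_def by simp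
  have inC2: "\<And>j k. (i,j) \<in> R\<^sup>* \<Longrightarrow> (j,k) \<in> R \<Longrightarrow> k \<in> C0" unfolding C0_def
    by (auto intro: rtrancl_into_rtrancl)
  {
    assume g: "goodc R \<sigma> C0" and r: "r \<in> C0"
    let ?g = "gfun R \<sigma> C0"
    have "x$i * ?g i = x$r * ?g r"
    proof (rule propag2[where h="\<lambda>j. x$j * ?g j" and R=R])
      fix j k assume e: "(j,k) \<in> R" and p: "(i,j) \<in> R\<^sup>*"
      have "?g j = \<sigma> * ?g k" using gfun_prop(2)[OF g] inC[OF p] inC2[OF p e] e by blast
      then show "x$j * ?g j = x$k * ?g k" using xe[OF e] s2
        by (simp add: power2_eq_square algebra_simps)
    next
      show "(i,r) \<in> R\<^sup>*" using r unfolding C0_def by simp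
    qed
    moreover have "?g i * ?g i = 1" using gfun_prop(1)[OF g] C0(2) by auto
    ultimately show "x$i = x$r * ?g r * ?g i"
      by (metis (no_types, lifting) mult.assoc mult.right_neutral)
  }
  {
    assume ng: "\<not> goodc R \<sigma> C0"
    show "x$i = 0"
    proof (rule ccontr)
      assume nz: "x$i \<noteq> 0"
      have sa: "\<bar>\<sigma>\<bar> = 1" proof -
        have "\<sigma> = 1 \<or> \<sigma> = -1" using s2 by (simp add: power2_eq_1_iff)
        then show ?thesis by auto
      qed
      have ab: "\<bar>x$i\<bar> = \<bar>x$j\<bar>" if "j \<in> C0" for j
      proof (rule propag2[where h="\<lambda>j. \<bar>x$j\<bar>" and R=R])
        fix j k assume e: "(j,k) \<in> R"
        show "\<bar>x$j\<bar> = \<bar>x$k\<bar>" using xe[OF e] sa by (simp add: abs_mult)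
      next
        show "(i,j) \<in> R\<^sup>*" using that unfolding C0_def by simp
      qed
      define g where "g j = x$j / \<bar>x$i\<bar>" for j
      have "goodc R \<sigma> C0" unfolding goodc_def
      proof (intro exI[of _ g] conjI ballI impI)
        fix j assume "j \<in> C0"
        then have "\<bar>x$j\<bar> = \<bar>x$i\<bar>" using ab by simp
        have "\<bar>x$i\<bar> \<noteq> 0" using nz by simp
        show "g j = 1 \<or> g j = -1"
        proof (cases "x$j \<ge> 0")
          case True
          with \<open>\<bar>x$j\<bar> = \<bar>x$i\<bar>\<close> have "x$j = \<bar>x$i\<bar>" by simp
          then show ?thesis using \<open>\<bar>x$i\<bar> \<noteq> 0\<close> unfolding g_def by simp
        next
          case False
          with \<open>\<bar>x$j\<bar> = \<bar>x$i\<bar>\<close> have "x$j = - \<bar>x$i\<bar>" by simp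
          then show ?thesis using \<open>\<bar>x$i\<bar> \<noteq> 0\<close> unfolding g_def by simp
        qed
      next
        fix j k assume "(j,k) \<in> R"
        then show "g j = \<sigma> * g k" using xe unfolding g_def by simp
      qed
      then show False using ng by simp
    qed
  }
qed

lemma K_span:
  assumes s: "sym R" and s2: "\<sigma>^2 = (1::real)" and x: "x \<in> Kset R \<sigma>"
  shows "x \<in> span (vc R \<sigma> ` {C \<in> UNIV // R\<^sup>*. goodc R \<sigma> C})"
proof -
  let ?G = "{C \<in> UNIV // R\<^sup>*. goodc R \<sigma> C}"
  define rep where "rep C = (SOME a. a \<in> C)" for C :: "'a set"
  define c where "c C = x$(rep C) * gfun R \<sigma> C (rep C)" for C
  have rep: "rep C \<in> C" if "C \<in> UNIV // R\<^sup>*" for C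
    using comp_ne[OF that] unfolding rep_def by (auto intro: someI)
  have "x = (\<Sum>C\<in>?G. c C *\<^sub>R vc R \<sigma> C)"
  proof (rule vec_eq_iff[THEN iffD2, rule_format])
    fix i
    define C0 where "C0 = R\<^sup>* `` {i}"
    have C0: "C0 \<in> UNIV // R\<^sup>*" "i \<in> C0" unfolding C0_def by (rule comp_of)+
    have "(\<Sum>C\<in>?G. c C *\<^sub>R vc R \<sigma> C) $ i = (\<Sum>C\<in>?G. c C * vc R \<sigma> C $ i)"
      by (simp add: sum_component)
    also have "\<dots> = (\<Sum>C\<in>?G. if C = C0 then c C0 * vc R \<sigma> C0 $ i else 0)"
    proof (rule sum.cong[OF refl])
      fix C assume C: "C \<in> ?G"
      show "c C * vc R \<sigma> C $ i = (if C = C0 then c C0 * vc R \<sigma> C0 $ i else 0)"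
      proof (cases "i \<in> C")
        case True
        then have "C = C0" using comp_eq[OF s _ True] C unfolding C0_def by auto
        then show ?thesis by simp
      next
        case False
        then have "C \<noteq> C0" using C0 by auto
        then show ?thesis using False by (simp add: vc_at)
      qed
    qed
    also have "\<dots> = (if goodc R \<sigma> C0 then c C0 * vc R \<sigma> C0 $ i else 0)"
      using C0 by (simp add: sum.delta)
    also have "\<dots> = x $ i"
    proof (cases "goodc R \<sigma> C0")
      case True
      then show ?thesis using K_value(1)[OF s s2 x True[unfolded C0_def] rep[OF C0(1), unfolded C0_def]] C0
        by (simp add: c_def vc_at C0_def)
    next
      case False
      then show ?thesis using K_value(2)[OF s s2 x False[unfolded C0_def]] by simp
    qed
    finally show "x $ i = (\<Sum>C\<in>?G. c C *\<^sub>R vc R \<sigma> C) $ i" by simp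
  qed
  also have "\<dots> \<in> span (vc R \<sigma> ` ?G)"
    by (intro span_sum span_scale span_base) auto
  finally show ?thesis .
qed

lemma dim_K:
  assumes s: "sym R" and s2: "\<sigma>^2 = (1::real)"
  shows "dim (Kset R \<sigma>) = card {C \<in> UNIV // R\<^sup>*. goodc R \<sigma> C}"
proof (rule dim_unique)
  let ?G = "{C \<in> UNIV // R\<^sup>*. goodc R \<sigma> C}"
  show "vc R \<sigma> ` ?G \<subseteq> Kset R \<sigma>" using vc_K[OF s] by auto
  show "Kset R \<sigma> \<subseteq> span (vc R \<sigma> ` ?G)" using K_span[OF s s2] by auto
  show "independent (vc R \<sigma> ` ?G)"
  proof (rule pairwise_orthogonal_independent)
    show "pairwise orthogonal (vc R \<sigma> ` ?G)"
      unfolding pairwise_def orthogonal_def using vc_orth[OF s] by auto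
    show "0 \<notin> vc R \<sigma> ` ?G"
    proof
      assume "0 \<in> vc R \<sigma> ` ?G"
      then obtain C where C: "C \<in> ?G" "vc R \<sigma> C = 0" by auto
      obtain a where "a \<in> C" using comp_ne C by blast
      then show False using vc_nz[of R \<sigma> C a] C by simp
    qed
  qed
  show "card (vc R \<sigma> ` ?G) = card ?G" by (rule card_image[OF vc_inj[OF s]])
qed


lemma sym_U: "sym (undir_edges E)"
  by (auto simp: sym_def undir_edges_def)

lemma ker_K:
  assumes "\<sigma>^2 = (1::real)"
  shows "{x. deformed_laplacian E \<sigma> *v x = 0} = Kset (undir_edges E) \<sigma>"
  using ker_iff[OF assms] by (auto simp: Kset_def)

lemma good1: "goodc R 1 C"
  unfolding goodc_def by (intro exI[of _ "\<lambda>_. 1"]) auto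

lemma goodm1: "goodc (undir_edges E) (-1) C \<longleftrightarrow> bipartite_on E C"
proof
  assume "goodc (undir_edges E) (-1) C"
  then obtain g :: "_ \<Rightarrow> real" where g1: "\<forall>i\<in>C. g i = 1 \<or> g i = -1"
    and g2: "\<forall>i\<in>C. \<forall>j\<in>C. (i,j) \<in> undir_edges E \<longrightarrow> g i = -1 * g j"
    unfolding goodc_def by blast
  show "bipartite_on E C" unfolding bipartite_on_def
  proof (intro exI[of _ "\<lambda>i. g i = 1"] ballI impI)
    fix i j assume "i \<in> C" "j \<in> C" "(i,j) \<in> undir_edges E"
    then have a: "g i = -1 * g j" and b: "g i = 1 \<or> g i = -1" and c: "g j = 1 \<or> g j = -1"
      using g1 g2 by blast+
    from b c a show "(g i = 1) \<noteq> (g j = 1)" by auto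
  qed
next
  assume "bipartite_on E C"
  then obtain f :: "_ \<Rightarrow> bool" where f: "\<forall>i\<in>C. \<forall>j\<in>C. (i, j) \<in> undir_edges E \<longrightarrow> f i \<noteq> f j"
    unfolding bipartite_on_def by blast
  show "goodc (undir_edges E) (-1) C" unfolding goodc_def
  proof (intro exI[of _ "\<lambda>i. if f i then 1 else (-1::real)"] conjI ballI impI)
    fix i j assume "i \<in> C" "j \<in> C" "(i,j) \<in> undir_edges E"
    then show "(if f i then 1 else -1::real) = -1 * (if f j then 1 else -1)" using f by force
  qed auto
qed

theorem proposition3p5:
  fixes E :: "('n::finite \<times> 'n) set"
  assumes no_loops: "\<forall>i. (i, i) \<notin> E"
  shows "is_eigenvalue (deformed_laplacian E) 1
    \<and> geom_mult (deformed_laplacian E) 1 = card (undir_components E)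
    \<and> (is_eigenvalue (deformed_laplacian E) (-1) \<longleftrightarrow>
         (\<exists>C\<in>undir_components E. bipartite_on E C))
    \<and> (is_eigenvalue (deformed_laplacian E) (-1) \<longrightarrow>
         geom_mult (deformed_laplacian E) (-1) =
           card {C \<in> undir_components E. bipartite_on E C})"
proof -
  let ?R = "undir_edges E"
  have s1: "(1::real)^2 = 1" by simp
  have sm1: "(-1::real)^2 = 1" by simp
  have ev1: "is_eigenvalue (deformed_laplacian E) 1"
    unfolding is_eigenvalue_def
  proof (intro exI[of _ "\<chi> i. (1::real)"] conjI)
    show "(\<chi> i. (1::real)) \<noteq> 0" by (simp add: vec_eq_iff)
    show "deformed_laplacian E 1 *v (\<chi> i. 1) = 0"
      by (rule ker_iff[OF s1, THEN iffD2]) simp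
  qed
  have gm1: "geom_mult (deformed_laplacian E) 1 = card (undir_components E)"
    unfolding geom_mult_def ker_K[OF s1] dim_K[OF sym_U s1] undir_components_def
    by (simp add: good1)
  have gmm1: "geom_mult (deformed_laplacian E) (-1) = card {C \<in> undir_components E. bipartite_on E C}"
    unfolding geom_mult_def ker_K[OF sm1] dim_K[OF sym_U sm1] undir_components_def
    by (simp add: goodm1)
  have evm1: "is_eigenvalue (deformed_laplacian E) (-1) \<longleftrightarrow> (\<exists>C\<in>undir_components E. bipartite_on E C)"
  proof
    assume "is_eigenvalue (deformed_laplacian E) (-1)"
    then obtain x where x: "x \<noteq> 0" "x \<in> Kset ?R (-1)"
      unfolding is_eigenvalue_def using ker_K[OF sm1] by blast
    have "x \<in> span (vc ?R (-1) ` {C \<in> UNIV // ?R\<^sup>*. goodc ?R (-1) C})"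
      by (rule K_span[OF sym_U sm1 x(2)])
    then have "{C \<in> UNIV // ?R\<^sup>*. goodc ?R (-1) C} \<noteq> {}" using x(1)
      by (metis image_empty span_empty singletonD)
    then show "\<exists>C\<in>undir_components E. bipartite_on E C"
      using goodm1 unfolding undir_components_def by auto
  next
    assume "\<exists>C\<in>undir_components E. bipartite_on E C"
    then obtain C where C: "C \<in> UNIV // ?R\<^sup>*" "goodc ?R (-1) C"
      using goodm1 unfolding undir_components_def by auto
    obtain a where a: "a \<in> C" using comp_ne C by blast
    show "is_eigenvalue (deformed_laplacian E) (-1)"
      unfolding is_eigenvalue_def
    proof (intro exI[of _ "vc ?R (-1) C"] conjI)
      show "vc ?R (-1) C \<noteq> 0" using vc_nz[OF C(2) a] by auto
      show "deformed_laplacian E (-1) *v vc ?R (-1) C = 0"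
        using vc_K[OF sym_U C] ker_K[OF sm1] by blast
    qed
  qed
  show ?thesis using ev1 gm1 gmm1 evm1 by blast
qed

end
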